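(* Let $\Lambda=[-L,L]^d\cap\mathbb{Z}^d=\bigcup_{m=1}^M\Lambda_m$ be a decomposition into disjoint boxes and $\beta=(\beta_1,\dots,\beta_M)\in(0,\infty]^M$. Then, almost surely, \[ \big\|\mathcal{D}^-_\beta\,h_\Lambda^{1/2}\big\|\leq\sqrt{\Delta(\mathcal{G}_M)+1}, \] where $\|\cdot\|$ is the operator norm.
   Context: Fix $d\geq1$, $k_{\max}\in(0,\infty)$, a bounded probability density $\nu$ with $\operatorname{supp}\nu=[0,k_{\max}]$; $(k_x)_{x\in\Lambda}$ i.i.d. with density $\nu$. $|x|$ is the $\ell^1$-norm on $\mathbb{Z}^d$; a box is $([a_1,b_1]\times\cdots\times[a_d,b_d])\cap\mathbb{Z}^d$. For a box $X$, $h_X$ is the real symmetric matrix on $\ell^2(X)$ with $\langle\delta_x,h_X\delta_y\rangle=2d+k_x$ if $x=y$, $-1$ if $|x-y|=1$, $0$ otherwise (the $d$-dimensional finite-volume Anderson model; $h_{\Lambda_m}$ is the principal submatrix of $h_\Lambda$ on $\Lambda_m$; these matrices are a.s. positive definite). $\mathcal{D}^-_\beta=\bigoplus_{m=1}^Mh_{\Lambda_m}^{-1/2}\tanh(\beta_mh_{\Lambda_m}^{1/2})$ on $\bigoplus_m\ell^2(\Lambda_m)=\ell^2(\Lambda)$, with the convention $\tanh(\infty\cdot h^{1/2})=\mathbb{1}$. The dual graph $\mathcal{G}_M$ of the decomposition has vertices $\Lambda_1,\dots,\Lambda_M$ and an edge $\{\Lambda_j,\Lambda_k\}$ iff $\min\{|x-y|:x\in\Lambda_j,y\in\Lambda_k\}=1$;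 $\Delta(\mathcal{G}_M)$ is its maximum degree. *)

theory Defs
  imports "HOL-Probability.Probability"
begin

text \<open>Points of Z^d are integer lists of length d.  Matrices on l^2(X), X a finite set
of points, are functions of two points, vanishing outside X x X.\<close>

definition l1dist :: "int list \<Rightarrow> int list \<Rightarrow> nat" where
  "l1dist x y = (\<Sum>i<length x. nat \<bar>x ! i - y ! i\<bar>)"

definition box :: "nat \<Rightarrow> (nat \<Rightarrow> int) \<Rightarrow> (nat \<Rightarrow> int) \<Rightarrow> int list set" where
  "box d a b = {x. length x = d \<and> (\<forall>i<d. a i \<le> x ! i \<and> x ! i \<le> b i)}"

definition is_box :: "nat \<Rightarrow> int list set \<Rightarrow> bool" where
  "is_box d X \<longleftrightarrow> (\<exists>a b. (\<forall>i<d. a i \<le> b i) \<and> X = box d a b)"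

definition hmat :: "nat \<Rightarrow> (int list \<Rightarrow> real) \<Rightarrow> int list set \<Rightarrow> int list \<Rightarrow> int list \<Rightarrow> real" where
  "hmat d k X x y =
     (if x \<in> X \<and> y \<in> X then
        (if x = y then 2 * real d + k x else if l1dist x y = 1 then -1 else 0)
      else 0)"

definition mvec :: "int list set \<Rightarrow> (int list \<Rightarrow> int list \<Rightarrow> real) \<Rightarrow> (int list \<Rightarrow> real) \<Rightarrow> int list \<Rightarrow> real" where
  "mvec X A v = (\<lambda>x. \<Sum>y\<in>X. A x y * v y)"

definition mmul :: "int list set \<Rightarrow> (int list \<Rightarrow> int list \<Rightarrow> real) \<Rightarrow> (int list \<Rightarrow> int list \<Rightarrow> real) \<Rightarrow> int list \<Rightarrow> int list \<Rightarrow> real" where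
  "mmul X A B = (\<lambda>x y. \<Sum>z\<in>X. A x z * B z y)"

definition matfun :: "(real \<Rightarrow> real) \<Rightarrow> int list set \<Rightarrow> (int list \<Rightarrow> int list \<Rightarrow> real) \<Rightarrow> int list \<Rightarrow> int list \<Rightarrow> real" where
  "matfun f X A = (THE B. (\<forall>x y. x \<notin> X \<or> y \<notin> X \<longrightarrow> B x y = 0) \<and>
      (\<forall>lam v. (\<forall>x. x \<notin> X \<longrightarrow> v x = 0) \<and> (\<forall>x\<in>X. mvec X A v x = lam * v x)
          \<longrightarrow> (\<forall>x\<in>X. mvec X B v x = f lam * v x)))"

definition opnorm :: "int list set \<Rightarrow> (int list \<Rightarrow> int list \<Rightarrow> real) \<Rightarrow> real" where
  "opnorm X A = Sup {sqrt (\<Sum>x\<in>X. (mvec X A v x)\<^sup>2) | v.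
        (\<forall>x. x \<notin> X \<longrightarrow> v x = 0) \<and> (\<Sum>x\<in>X. (v x)\<^sup>2) \<le> 1}"

definition tanh_ext :: "ereal \<Rightarrow> real \<Rightarrow> real" where
  "tanh_ext \<beta> s = (if \<beta> = \<infinity> then 1 else tanh (real_of_ereal \<beta> * s))"

definition Dminus :: "nat \<Rightarrow> (int list \<Rightarrow> real) \<Rightarrow> nat \<Rightarrow> (nat \<Rightarrow> int list set) \<Rightarrow> (nat \<Rightarrow> ereal)
     \<Rightarrow> int list \<Rightarrow> int list \<Rightarrow> real" where
  "Dminus d k M Lam \<beta> = (\<lambda>x y. \<Sum>m\<in>{1..M}.
      mmul (Lam m) (matfun (\<lambda>t. 1 / sqrt t) (Lam m) (hmat d k (Lam m)))
                   (matfun (\<lambda>t. tanh_ext (\<beta> m) (sqrt t)) (Lam m) (hmat d k (Lam m))) x y)"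

definition dual_adj :: "int list set \<Rightarrow> int list set \<Rightarrow> bool" where
  "dual_adj A B \<longleftrightarrow> Min {l1dist x y | x y. x \<in> A \<and> y \<in> B} = 1"

definition max_degree :: "nat \<Rightarrow> (nat \<Rightarrow> int list set) \<Rightarrow> nat" where
  "max_degree M Lam = Max ((\<lambda>j. card {i\<in>{1..M}. i \<noteq> j \<and> dual_adj (Lam j) (Lam i)}) ` {1..M})"

end

theory Submission
  imports Defs
begin

definition ip :: "int list set \<Rightarrow> (int list \<Rightarrow> real) \<Rightarrow> (int list \<Rightarrow> real) \<Rightarrow> real" where
  "ip X u v = (\<Sum>x\<in>X. u x * v x)"

definition orthon :: "int list set \<Rightarrow> (nat \<Rightarrow> int list \<Rightarrow> real) \<Rightarrow> nat \<Rightarrow> bool" where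
  "orthon X u n \<longleftrightarrow> (\<forall>i<n. \<forall>x. x \<notin> X \<longrightarrow> u i x = 0) \<and>
      (\<forall>i<n. \<forall>j<n. ip X (u i) (u j) = (if i = j then 1 else 0))"

lemma ip_sym: "ip X u v = ip X v u"
  unfolding ip_def by (simp add: mult.commute)

lemma bessel:
  assumes "orthon X u n"
  shows "(\<Sum>i<n. (ip X (u i) w)\<^sup>2) \<le> ip X w w"
proof -
  define c where "c i = ip X (u i) w" for i
  define s where "s x = (\<Sum>i<n. c i * u i x)" for x
  have "0 \<le> (\<Sum>x\<in>X. (w x - s x)\<^sup>2)" by (simp add: sum_nonneg)
  also have "(\<Sum>x\<in>X. (w x - s x)\<^sup>2) = (\<Sum>x\<in>X. (w x)\<^sup>2) - 2 * (\<Sum>x\<in>X. w x * s x)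
      + (\<Sum>x\<in>X. s x * s x)"
    by (simp add: power2_eq_square algebra_simps sum.distrib sum_subtractf sum_distrib_left)
  also have "(\<Sum>x\<in>X. w x * s x) = (\<Sum>x\<in>X. \<Sum>i<n. c i * (u i x * w x))"
    by (simp add: s_def sum_distrib_left mult_ac)
  also have "\<dots> = (\<Sum>i<n. \<Sum>x\<in>X. c i * (u i x * w x))" by (rule sum.swap)
  also have "\<dots> = (\<Sum>i<n. c i * c i)" by (simp add: c_def ip_def sum_distrib_left)
  also have "(\<Sum>x\<in>X. s x * s x) = (\<Sum>x\<in>X. \<Sum>i<n. \<Sum>j<n. c i * c j * (u i x * u j x))"
    by (simp add: s_def sum_distrib_left sum_distrib_right mult_ac)
  also have "\<dots> = (\<Sum>i<n. \<Sum>x\<in>X. \<Sum>j<n. c i * c j * (u i x * u j x))" by (rule sum.swap)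
  also have "\<dots> = (\<Sum>i<n. \<Sum>j<n. \<Sum>x\<in>X. c i * c j * (u i x * u j x))"
    by (intro sum.cong refl sum.swap)
  also have "\<dots> = (\<Sum>i<n. \<Sum>j<n. c i * c j * ip X (u i) (u j))"
    by (simp add: ip_def sum_distrib_left)
  also have "\<dots> = (\<Sum>i<n. \<Sum>j<n. if j = i then c i * c j else 0)"
    by (intro sum.cong refl) (use assms in \<open>auto simp: orthon_def\<close>)
  also have "\<dots> = (\<Sum>i<n. c i * c i)"
    by simp
  finally show ?thesis by (simp add: c_def power2_eq_square ip_def)
qed

lemma orthon_card:
  assumes "orthon X u n" "finite X"
  shows "n \<le> card X"
proof -
  define e where "e y = (\<lambda>x::int list. if x = y then (1::real) else 0)" for y
  have "real n = (\<Sum>i<n. ip X (u i) (u i))" using assms unfolding orthon_def by simp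
  also have "\<dots> = (\<Sum>y\<in>X. \<Sum>i<n. (ip X (u i) (e y))\<^sup>2)"
  proof -
    have "ip X (u i) (e y) = u i y" if "y \<in> X" for i y
      using that assms(2) by (simp add: ip_def e_def if_distrib cong: if_cong)
    then show ?thesis
      by (simp add: ip_def power2_eq_square sum.swap[of _ X] cong: sum.cong)
  qed
  also have "\<dots> \<le> (\<Sum>y\<in>X. ip X (e y) (e y))"
    by (intro sum_mono bessel assms)
  also have "\<dots> = (\<Sum>y\<in>X. 1)"
    using assms(2) by (intro sum.cong) (simp_all add: ip_def e_def if_distrib cong: if_cong)
  finally show ?thesis by simp
qed



lemma cont_ip: "continuous_on UNIV (\<lambda>v::int list \<Rightarrow> real. ip X (p v) (q v))"
  if "continuous_on UNIV p" "continuous_on UNIV q" for p q :: "(int list \<Rightarrow> real) \<Rightarrow> int list \<Rightarrow> real"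
  unfolding ip_def
proof (rule continuous_on_sum)
  fix x
  show "continuous_on UNIV (\<lambda>v. p v x * q v x)"
    using continuous_on_product_then_coordinatewise[OF that(1), of x]
      continuous_on_product_then_coordinatewise[OF that(2), of x]
    by (rule continuous_on_mult)
qed

lemma compact_sphere_fun:
  assumes "finite X"
  shows "compact {v::int list \<Rightarrow> real. (\<forall>x. x \<notin> X \<longrightarrow> v x = 0) \<and> ip X v v = 1 \<and> (\<forall>i<n. ip X (u i) v = 0)}"
    (is "compact ?K")
proof -
  define S where "S x = (if x \<in> X then {-1..1} else {0::real})" for x
  have cB: "compact (PiE UNIV S)"
  proof -
    have "compactin (product_topology (\<lambda>_. euclidean) UNIV) (PiE UNIV S)"
      by (subst compactin_PiE) (auto simp: S_def)
    then show ?thesis by (simp add: euclidean_product_topology)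
  qed
  define C where "C = (\<Inter>x\<in>-X. {v::int list \<Rightarrow> real. v x = 0}) \<inter> {v. ip X v v = 1} \<inter> (\<Inter>i\<in>{..<n}. {v. ip X (u i) v = 0})"
  have cC: "closed C"
  proof -
    have c1: "closed {v::int list \<Rightarrow> real. v x = 0}" for x
      by (rule closed_Collect_eq) (simp_all add: continuous_on_const)
    have c2: "closed {v::int list \<Rightarrow> real. ip X v v = 1}"
      by (rule closed_Collect_eq) (simp_all add: continuous_on_const cont_ip continuous_on_id)
    have c3: "closed {v::int list \<Rightarrow> real. ip X (u i) v = 0}" for i
      by (rule closed_Collect_eq) (simp_all add: continuous_on_const cont_ip continuous_on_id)
    show ?thesis unfolding C_def
      by (intro closed_Int closed_INT ballI c1 c2 c3)
  qed
  have sub: "?K \<subseteq> PiE UNIV S"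
  proof
    fix v assume v: "v \<in> ?K"
    have "v x \<in> S x" for x
    proof (cases "x \<in> X")
      case True
      have "(v x)\<^sup>2 \<le> (\<Sum>y\<in>X. (v y)\<^sup>2)"
        by (rule member_le_sum) (use True assms in auto)
      also have "\<dots> = 1" using v by (simp add: ip_def power2_eq_square)
      finally have "\<bar>v x\<bar> \<le> 1" by (simp add: abs_square_le_1)
      then show ?thesis using True by (auto simp: S_def abs_le_iff)
    next
      case False then show ?thesis using v by (auto simp: S_def)
    qed
    then show "v \<in> PiE UNIV S" by auto
  qed
  have "?K = PiE UNIV S \<inter> C" 
  proof (rule set_eqI, rule iffI)
    fix v assume "v \<in> ?K" then show "v \<in> PiE UNIV S \<inter> C" using sub unfolding C_def by blast
  next
    fix v assume "v \<in> PiE UNIV S \<inter> C" then show "v \<in> ?K" unfolding C_def by blast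
  qed
  then show ?thesis using compact_Int_closed[OF cB cC] by simp
qed



definition symm :: "int list set \<Rightarrow> (int list \<Rightarrow> int list \<Rightarrow> real) \<Rightarrow> bool" where
  "symm X A \<longleftrightarrow> (\<forall>x\<in>X. \<forall>y\<in>X. A x y = A y x)"

lemma ip_mvec_sym:
  assumes "symm X A"
  shows "ip X p (mvec X A q) = ip X (mvec X A p) q"
proof -
  have "ip X p (mvec X A q) = (\<Sum>x\<in>X. \<Sum>y\<in>X. p x * A x y * q y)"
    by (simp add: ip_def mvec_def sum_distrib_left mult.assoc)
  also have "\<dots> = (\<Sum>y\<in>X. \<Sum>x\<in>X. p x * A x y * q y)" by (rule sum.swap)
  also have "\<dots> = (\<Sum>y\<in>X. \<Sum>x\<in>X. A y x * p x * q y)"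
    using assms unfolding symm_def by (intro sum.cong refl) (simp add: mult_ac)
  also have "\<dots> = ip X (mvec X A p) q"
    by (simp add: ip_def mvec_def sum_distrib_right)
  finally show ?thesis .
qed

lemma mvec_lin: "mvec X A (\<lambda>x. p x + t * q x) = (\<lambda>y. mvec X A p y + t * mvec X A q y)"
  by (simp add: mvec_def algebra_simps sum.distrib sum_distrib_left)

lemma mvec_scale: "mvec X A (\<lambda>x. c * p x) = (\<lambda>y. c * mvec X A p y)"
  by (simp add: mvec_def algebra_simps sum_distrib_left)

lemma mvec_scale': "mvec X A (\<lambda>x. p x / c) = (\<lambda>y. mvec X A p y / c)"
  by (simp add: mvec_def sum_divide_distrib)

lemma ip_lin_right: "ip X p (\<lambda>x. q x + t * r x) = ip X p q + t * ip X p r"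
  by (simp add: ip_def algebra_simps sum.distrib sum_distrib_left)

lemma ip_lin_left: "ip X (\<lambda>x. q x + t * r x) p = ip X q p + t * ip X r p"
  by (simp add: ip_def algebra_simps sum.distrib sum_distrib_left)

lemma ip_div_left: "ip X (\<lambda>x. q x / c) p = ip X q p / c"
  by (simp add: ip_def sum_divide_distrib)

lemma ip_div_right: "ip X p (\<lambda>x. q x / c) = ip X p q / c"
  by (simp add: ip_def sum_divide_distrib)

lemma ip_restrict_right: "ip X p (\<lambda>x. if x \<in> X then q x else 0) = ip X p q"
  by (simp add: ip_def)

lemma ip_self_nonneg: "0 \<le> ip X p p"
  by (simp add: ip_def sum_nonneg)

lemma ip_self_zero:
  assumes "finite X" "ip X p p = 0" "x \<in> X"
  shows "p x = 0"
proof -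
  have "\<forall>x\<in>X. p x * p x = 0"
    using assms(2) sum_nonneg_eq_0_iff[OF assms(1), of "\<lambda>x. p x * p x"] by (simp add: ip_def)
  then show ?thesis using assms(3) by simp
qed

lemma quad_zero:
  fixes a b :: real
  assumes "\<forall>t. 2 * t * b + t\<^sup>2 * a \<le> 0"
  shows "b = 0"
proof (rule ccontr)
  assume b: "b \<noteq> 0"
  define s where "s = \<bar>a\<bar> + 1"
  have s: "s > 0" by (simp add: s_def)
  define t where "t = b / s"
  have "2 * t * b + t\<^sup>2 * a = b\<^sup>2 * (2 * s + a) / s\<^sup>2"
    using s by (simp add: t_def field_simps power2_eq_square)
  moreover have "2 * s + a > 0" by (simp add: s_def)
  moreover have "b\<^sup>2 > 0" using b by simp
  ultimately have "2 * t * b + t\<^sup>2 * a > 0" using s by simp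
  with assms show False by (meson not_le)
qed

lemma cont_mvec: "continuous_on UNIV (\<lambda>v. mvec X A v)"
proof (rule continuous_on_coordinatewise_then_product)
  fix x
  show "continuous_on UNIV (\<lambda>v. mvec X A v x)"
    unfolding mvec_def
  proof (rule continuous_on_sum)
    fix y
    show "continuous_on UNIV (\<lambda>v::int list \<Rightarrow> real. A x y * v y)"
      by (rule continuous_on_mult[OF continuous_on_const continuous_on_product_coordinates])
  qed
qed

lemma eigen_exists:
  assumes fin: "finite X" and sym: "symm X A" and orth: "orthon X u n"
    and eig: "\<forall>i<n. \<forall>x\<in>X. mvec X A (u i) x = lam i * u i x"
    and r0: "\<forall>x. x \<notin> X \<longrightarrow> r x = 0" and rorth: "\<forall>i<n. ip X (u i) r = 0" and rnz: "ip X r r \<noteq> 0"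
  shows "\<exists>v \<mu>. (\<forall>x. x \<notin> X \<longrightarrow> v x = 0) \<and> ip X v v = 1 \<and> (\<forall>i<n. ip X (u i) v = 0)
            \<and> (\<forall>x\<in>X. mvec X A v x = \<mu> * v x)"
proof -
  define K where "K = {v. (\<forall>x. x \<notin> X \<longrightarrow> v x = 0) \<and> ip X v v = 1 \<and> (\<forall>i<n. ip X (u i) v = 0)}"
  define f where "f v = ip X v (mvec X A v)" for v
  have cK: "compact K" using compact_sphere_fun[OF fin] unfolding K_def .
  have rpos: "ip X r r > 0" using rnz ip_self_nonneg[of X r] by linarith
  define r' where "r' x = r x / sqrt (ip X r r)" for x
  have "r' \<in> K"
  proof -
    have "ip X r' r' = ip X r r / (sqrt (ip X r r) * sqrt (ip X r r))"
      unfolding r'_def by (simp add: ip_div_left ip_div_right)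
    also have "\<dots> = 1" using rpos by simp
    finally show ?thesis using r0 rorth unfolding K_def r'_def by (simp add: ip_div_right)
  qed
  then have Kne: "K \<noteq> {}" by auto
  have cf: "continuous_on K f"
    unfolding f_def
    by (rule continuous_on_subset[OF cont_ip[OF continuous_on_id cont_mvec]]) simp
  obtain v0 where v0K: "v0 \<in> K" and vmax: "\<forall>y\<in>K. f y \<le> f v0"
    using continuous_attains_sup[OF cK Kne cf] by blast
  define \<mu> where "\<mu> = f v0"
  have bound: "f z \<le> \<mu> * ip X z z"
    if z0: "\<forall>x. x \<notin> X \<longrightarrow> z x = 0" and zo: "\<forall>i<n. ip X (u i) z = 0" for z
  proof (cases "ip X z z = 0")
    case True
    then have "\<forall>x\<in>X. z x = 0" using ip_self_zero[OF fin] by blast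
    then have "f z = 0" by (simp add: f_def ip_def)
    then show ?thesis using True by simp
  next
    case False
    then have zp: "ip X z z > 0" using ip_self_nonneg[of X z] by linarith
    define z' where "z' x = z x / sqrt (ip X z z)" for x
    have "ip X z' z' = ip X z z / (sqrt (ip X z z) * sqrt (ip X z z))"
      unfolding z'_def by (simp add: ip_div_left ip_div_right)
    also have "\<dots> = 1" using zp by simp
    finally have "z' \<in> K" using z0 zo unfolding K_def z'_def by (simp add: ip_div_right)
    then have "f z' \<le> \<mu>" using vmax \<mu>_def by blast
    moreover have "f z' = f z / (sqrt (ip X z z) * sqrt (ip X z z))"
      unfolding f_def z'_def by (simp add: ip_div_left ip_div_right mvec_scale')
    ultimately have "f z / ip X z z \<le> \<mu>" using zp by simp
    then show ?thesis using zp by (simp add: divide_le_eq mult.commute)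
  qed
  have v0p: "\<forall>x. x \<notin> X \<longrightarrow> v0 x = 0" "ip X v0 v0 = 1" "\<forall>i<n. ip X (u i) v0 = 0"
    using v0K unfolding K_def by auto
  have orthb: "ip X w (mvec X A v0) - \<mu> * ip X w v0 = 0"
    if w0: "\<forall>x. x \<notin> X \<longrightarrow> w x = 0" and wo: "\<forall>i<n. ip X (u i) w = 0" for w
  proof -
    have "2 * t * (ip X w (mvec X A v0) - \<mu> * ip X w v0) + t\<^sup>2 * (f w - \<mu> * ip X w w) \<le> 0" for t
    proof -
      define z where "z = (\<lambda>x. v0 x + t * w x)"
      have "f z \<le> \<mu> * ip X z z"
        by (rule bound) (use w0 wo v0p in \<open>simp_all add: z_def ip_lin_right\<close>)
      moreover have "f z = f v0 + t * (ip X v0 (mvec X A w) + ip X w (mvec X A v0)) + t\<^sup>2 * f w"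
        unfolding f_def z_def
        by (simp add: mvec_lin ip_lin_left ip_lin_right algebra_simps power2_eq_square)
      moreover have "ip X v0 (mvec X A w) = ip X w (mvec X A v0)"
        using ip_mvec_sym[OF sym, of v0 w] ip_sym by metis
      moreover have "ip X z z = 1 + 2 * t * ip X w v0 + t\<^sup>2 * ip X w w"
        unfolding z_def using v0p(2)
        by (simp add: ip_lin_left ip_lin_right algebra_simps power2_eq_square ip_sym[of X v0 w])
      ultimately show ?thesis by (simp add: \<mu>_def algebra_simps)
    qed
    then show ?thesis using quad_zero by blast
  qed
  define z0 where "z0 x = (if x \<in> X then mvec X A v0 x - \<mu> * v0 x else 0)" for x
  have z0o: "\<forall>i<n. ip X (u i) z0 = 0"
  proof (intro allI impI)
    fix i assume i: "i < n"
    have "ip X (u i) z0 = ip X (u i) (\<lambda>x. mvec X A v0 x + (- \<mu>) * v0 x)"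
      unfolding z0_def by (simp add: ip_def)
    also have "\<dots> = ip X (u i) (mvec X A v0) + (- \<mu>) * ip X (u i) v0"
      by (rule ip_lin_right)
    also have "\<dots> = ip X (mvec X A (u i)) v0 - \<mu> * ip X (u i) v0"
      by (simp add: ip_mvec_sym[OF sym])
    also have "ip X (mvec X A (u i)) v0 = lam i * ip X (u i) v0"
      using eig i by (simp add: ip_def sum_distrib_left mult_ac)
    finally show "ip X (u i) z0 = 0" using v0p(3) i by simp
  qed
  have "ip X z0 z0 = ip X z0 (mvec X A v0) - \<mu> * ip X z0 v0"
  proof -
    have "ip X z0 z0 = ip X z0 (\<lambda>x. mvec X A v0 x + (- \<mu>) * v0 x)"
      unfolding ip_def by (intro sum.cong refl) (simp add: z0_def)
    also have "\<dots> = ip X z0 (mvec X A v0) + (- \<mu>) * ip X z0 v0" by (rule ip_lin_right)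
    finally show ?thesis by simp
  qed
  also have "\<dots> = 0" by (rule orthb) (use z0o in \<open>simp_all add: z0_def\<close>)
  finally have "\<forall>x\<in>X. z0 x = 0" using ip_self_zero[OF fin] by blast
  then have "\<forall>x\<in>X. mvec X A v0 x = \<mu> * v0 x" by (simp add: z0_def)
  then show ?thesis using v0p by blast
qed



definition eigfam where
  "eigfam X A u lam n \<longleftrightarrow> orthon X u n \<and> (\<forall>i<n. \<forall>x\<in>X. mvec X A (u i) x = lam i * u i x)"

definition cmpl where
  "cmpl X u n \<longleftrightarrow> (\<forall>v. \<forall>x\<in>X. v x = (\<Sum>i<n. ip X (u i) v * u i x))"

lemma ip_diff_right: "ip X p (\<lambda>x. q x - r x) = ip X p q - ip X p r"
  by (simp add: ip_def algebra_simps sum_subtractf)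

lemma orthon_sum:
  assumes "orthon X u n" "j < n"
  shows "ip X (u j) (\<lambda>y. \<Sum>i<n. a i * u i y) = a j"
proof -
  have "ip X (u j) (\<lambda>y. \<Sum>i<n. a i * u i y) = (\<Sum>y\<in>X. \<Sum>i<n. a i * (u j y * u i y))"
    by (simp add: ip_def sum_distrib_left mult_ac)
  also have "\<dots> = (\<Sum>i<n. \<Sum>y\<in>X. a i * (u j y * u i y))" by (rule sum.swap)
  also have "\<dots> = (\<Sum>i<n. a i * ip X (u j) (u i))" by (simp add: ip_def sum_distrib_left)
  also have "\<dots> = (\<Sum>i<n. if i = j then a i else 0)"
    by (intro sum.cong refl) (use assms in \<open>auto simp: orthon_def\<close>)
  also have "\<dots> = a j" using assms(2) by simp
  finally show ?thesis .
qed

lemma spectral: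
  assumes fin: "finite X" and sym: "symm X A"
  shows "\<exists>u lam n. eigfam X A u lam n \<and> cmpl X u n"
proof -
  define S where "S = {k. \<exists>u lam. eigfam X A u lam k}"
  have S0: "0 \<in> S" by (simp add: S_def eigfam_def orthon_def)
  have Sb: "S \<subseteq> {..card X}"
    using orthon_card[OF _ fin] unfolding S_def eigfam_def by auto
  then have finS: "finite S" using finite_subset by blast
  define n where "n = Max S"
  have "n \<in> S" using finS S0 n_def by (metis Max_in empty_iff)
  then obtain u lam where ef: "eigfam X A u lam n" unfolding S_def by blast
  have orth: "orthon X u n" and eig: "\<forall>i<n. \<forall>x\<in>X. mvec X A (u i) x = lam i * u i x"
    using ef unfolding eigfam_def by auto
  have "cmpl X u n"
    unfolding cmpl_def
  proof (intro allI ballI, rule ccontr)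
    fix v x assume x: "x \<in> X" and ne: "v x \<noteq> (\<Sum>i<n. ip X (u i) v * u i x)"
    define r where "r y = (if y \<in> X then v y - (\<Sum>i<n. ip X (u i) v * u i y) else 0)" for y
    have r0: "\<forall>y. y \<notin> X \<longrightarrow> r y = 0" by (simp add: r_def)
    have ro: "\<forall>j<n. ip X (u j) r = 0"
    proof (intro allI impI)
      fix j assume j: "j < n"
      have "ip X (u j) r = ip X (u j) (\<lambda>y. v y - (\<Sum>i<n. ip X (u i) v * u i y))"
        unfolding r_def ip_def by (intro sum.cong refl) simp
      also have "\<dots> = ip X (u j) v - ip X (u j) (\<lambda>y. \<Sum>i<n. ip X (u i) v * u i y)"
        by (rule ip_diff_right)
      also have "\<dots> = 0" using orthon_sum[OF orth j] by simp
      finally show "ip X (u j) r = 0" .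
    qed
    have rnz: "ip X r r \<noteq> 0"
    proof
      assume "ip X r r = 0"
      then have "r x = 0" using ip_self_zero[OF fin _ x] by blast
      then show False using ne x by (simp add: r_def)
    qed
    obtain w \<mu> where w0: "\<forall>x. x \<notin> X \<longrightarrow> w x = 0" and w1: "ip X w w = 1"
      and wo: "\<forall>i<n. ip X (u i) w = 0" and we: "\<forall>x\<in>X. mvec X A w x = \<mu> * w x"
      using eigen_exists[OF fin sym orth eig r0 ro rnz] by blast
    have "eigfam X A (u(n := w)) (lam(n := \<mu>)) (Suc n)"
      unfolding eigfam_def orthon_def
    proof (intro conjI allI impI)
      fix i x assume "i < Suc n" "x \<notin> X"
      then show "(u(n := w)) i x = 0" using orth w0 unfolding orthon_def by (cases "i = n") auto
    next
      fix i j assume i: "i < Suc n" and j: "j < Suc n"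
      show "ip X ((u(n := w)) i) ((u(n := w)) j) = (if i = j then 1 else 0)"
      proof (cases "i = n"; cases "j = n")
        assume "i = n" "j = n" then show ?thesis using w1 by simp
      next
        assume "i = n" "j \<noteq> n" then show ?thesis using wo j ip_sym[of X w] by simp
      next
        assume "i \<noteq> n" "j = n" then show ?thesis using wo i by simp
      next
        assume "i \<noteq> n" "j \<noteq> n" then show ?thesis using orth i j unfolding orthon_def by simp
      qed
    next
      fix i assume i: "i < Suc n"
      show "\<forall>x\<in>X. mvec X A ((u(n := w)) i) x = (lam(n := \<mu>)) i * (u(n := w)) i x"
        using eig we i by (cases "i = n") (auto simp: less_Suc_eq)
    qed
    then have "Suc n \<in> S" unfolding S_def by blast
    then have "Suc n \<le> n" using finS n_def by simp
    then show False by simp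
  qed
  then show ?thesis using ef by blast
qed



definition spec :: "int list set \<Rightarrow> (nat \<Rightarrow> int list \<Rightarrow> real) \<Rightarrow> (nat \<Rightarrow> real) \<Rightarrow> nat \<Rightarrow> (real \<Rightarrow> real) \<Rightarrow> int list \<Rightarrow> int list \<Rightarrow> real" where
  "spec X u lam n f = (\<lambda>x y. if x \<in> X \<and> y \<in> X then \<Sum>i<n. f (lam i) * u i x * u i y else 0)"

lemma mvec_spec:
  assumes "x \<in> X"
  shows "mvec X (spec X u lam n f) v x = (\<Sum>i<n. (f (lam i) * ip X (u i) v) * u i x)"
proof -
  have "mvec X (spec X u lam n f) v x = (\<Sum>y\<in>X. \<Sum>i<n. f (lam i) * u i x * u i y * v y)"
    unfolding mvec_def spec_def using assms by (intro sum.cong refl) (simp add: sum_distrib_right)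
  also have "\<dots> = (\<Sum>i<n. \<Sum>y\<in>X. f (lam i) * u i x * (u i y * v y))" by (subst sum.swap) (simp add: mult_ac)
  also have "\<dots> = (\<Sum>i<n. (f (lam i) * ip X (u i) v) * u i x)"
    by (simp add: ip_def sum_distrib_left mult_ac)
  finally show ?thesis .
qed

lemma ip_cong_right: "(\<And>x. x \<in> X \<Longrightarrow> F x = G x) \<Longrightarrow> ip X p F = ip X p G"
  unfolding ip_def by (intro sum.cong refl) simp

lemma spec_coef:
  assumes "orthon X u n" "j < n"
  shows "ip X (u j) (mvec X (spec X u lam n f) v) = f (lam j) * ip X (u j) v"
proof -
  have "ip X (u j) (mvec X (spec X u lam n f) v) = ip X (u j) (\<lambda>y. \<Sum>i<n. (f (lam i) * ip X (u i) v) * u i y)"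
    by (rule ip_cong_right) (simp add: mvec_spec)
  also have "\<dots> = f (lam j) * ip X (u j) v" by (rule orthon_sum[OF assms])
  finally show ?thesis .
qed

lemma ip_expand:
  assumes "cmpl X u n"
  shows "ip X p q = (\<Sum>i<n. ip X (u i) p * ip X (u i) q)"
proof -
  have pe: "\<forall>x\<in>X. p x = (\<Sum>i<n. ip X (u i) p * u i x)" using assms unfolding cmpl_def by blast
  have "ip X p q = (\<Sum>x\<in>X. p x * q x)" by (simp only: ip_def)
  also have "\<dots> = (\<Sum>x\<in>X. (\<Sum>i<n. ip X (u i) p * u i x) * q x)"
    using pe by (intro sum.cong refl) simp
  also have "\<dots> = (\<Sum>x\<in>X. \<Sum>i<n. ip X (u i) p * (u i x * q x))"
    by (simp add: sum_distrib_right sum_distrib_left mult_ac)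
  also have "\<dots> = (\<Sum>i<n. \<Sum>x\<in>X. ip X (u i) p * (u i x * q x))"
    by (rule sum.swap)
  also have "\<dots> = (\<Sum>i<n. ip X (u i) p * ip X (u i) q)"
    by (simp add: ip_def sum_distrib_left)
  finally show ?thesis .
qed

lemma ip_spec:
  assumes "orthon X u n" "cmpl X u n"
  shows "ip X p (mvec X (spec X u lam n f) q) = (\<Sum>i<n. f (lam i) * ip X (u i) p * ip X (u i) q)"
  unfolding ip_expand[OF assms(2), of p "mvec X (spec X u lam n f) q"]
  by (intro sum.cong refl) (simp add: spec_coef[OF assms(1)])

lemma spec_unique:
  assumes orth: "orthon X u n" and cm: "cmpl X u n"
    and B: "\<forall>i<n. \<forall>x\<in>X. mvec X B (u i) x = f (lam i) * u i x"
    and x: "x \<in> X" and y: "y \<in> X" and fin: "finite X"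
  shows "B x y = spec X u lam n f x y"
proof -
  define e where "e = (\<lambda>z. if z = y then (1::real) else 0)"
  have ce: "ip X (u i) e = u i y" for i
    using y fin by (simp add: ip_def e_def if_distrib cong: if_cong)
  have "B x y = (\<Sum>z\<in>X. B x z * e z)"
    using y fin by (simp add: e_def if_distrib cong: if_cong)
  also have "\<dots> = (\<Sum>z\<in>X. B x z * (\<Sum>i<n. u i y * u i z))"
  proof (intro sum.cong refl)
    fix z assume "z \<in> X"
    then have "e z = (\<Sum>i<n. ip X (u i) e * u i z)" using cm unfolding cmpl_def by blast
    then show "B x z * e z = B x z * (\<Sum>i<n. u i y * u i z)" by (simp only: ce)
  qed
  also have "\<dots> = (\<Sum>z\<in>X. \<Sum>i<n. u i y * (B x z * u i z))"
    by (simp add: sum_distrib_left mult_ac)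
  also have "\<dots> = (\<Sum>i<n. \<Sum>z\<in>X. u i y * (B x z * u i z))"
    by (rule sum.swap)
  also have "\<dots> = (\<Sum>i<n. u i y * mvec X B (u i) x)"
    by (simp add: mvec_def sum_distrib_left)
  also have "\<dots> = (\<Sum>i<n. f (lam i) * u i x * u i y)"
    using B x by (intro sum.cong refl) (simp add: mult_ac)
  also have "\<dots> = spec X u lam n f x y" using x y by (simp add: spec_def)
  finally show ?thesis .
qed

lemma eig_coef:
  assumes sym: "symm X A" and ef: "eigfam X A u lam n" and i: "i < n"
    and v: "\<forall>x\<in>X. mvec X A v x = \<mu> * v x"
  shows "ip X (u i) v = 0 \<or> lam i = \<mu>"
proof -
  have "ip X (u i) (mvec X A v) = \<mu> * ip X (u i) v"
    unfolding ip_def using v by (simp add: sum_distrib_left mult_ac)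
  moreover have "ip X (u i) (mvec X A v) = lam i * ip X (u i) v"
    using ip_mvec_sym[OF sym] ef i unfolding eigfam_def ip_def by (simp add: sum_distrib_left mult_ac)
  ultimately show ?thesis by auto
qed

lemma matfun_eq:
  assumes fin: "finite X" and sym: "symm X A" and ef: "eigfam X A u lam n" and cm: "cmpl X u n"
  shows "matfun f X A = spec X u lam n f"
  unfolding matfun_def
proof (rule the_equality)
  have orth: "orthon X u n" using ef unfolding eigfam_def by simp
  show "(\<forall>x y. x \<notin> X \<or> y \<notin> X \<longrightarrow> spec X u lam n f x y = 0) \<and>
    (\<forall>lam' v. (\<forall>x. x \<notin> X \<longrightarrow> v x = 0) \<and> (\<forall>x\<in>X. mvec X A v x = lam' * v x) \<longrightarrow>
              (\<forall>x\<in>X. mvec X (spec X u lam n f) v x = f lam' * v x))"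
  proof (intro conjI allI impI ballI)
    fix x y assume "x \<notin> X \<or> y \<notin> X" then show "spec X u lam n f x y = 0" by (auto simp: spec_def)
  next
    fix lam' v x
    assume h: "(\<forall>x. x \<notin> X \<longrightarrow> v x = 0) \<and> (\<forall>x\<in>X. mvec X A v x = lam' * v x)" and x: "x \<in> X"
    have "mvec X (spec X u lam n f) v x = (\<Sum>i<n. (f (lam i) * ip X (u i) v) * u i x)"
      by (rule mvec_spec[OF x])
    also have "\<dots> = (\<Sum>i<n. f lam' * (ip X (u i) v * u i x))"
    proof (intro sum.cong refl)
      fix i assume "i \<in> {..<n}"
      then have "ip X (u i) v = 0 \<or> lam i = lam'" using eig_coef[OF sym ef, of i v lam'] h by simp
      then show "f (lam i) * ip X (u i) v * u i x = f lam' * (ip X (u i) v * u i x)" by auto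
    qed
    also have "\<dots> = f lam' * v x" using cm x unfolding cmpl_def by (simp add: sum_distrib_left[symmetric])
    finally show "mvec X (spec X u lam n f) v x = f lam' * v x" .
  qed
next
  fix B
  assume h: "(\<forall>x y. x \<notin> X \<or> y \<notin> X \<longrightarrow> B x y = 0) \<and>
    (\<forall>lam' v. (\<forall>x. x \<notin> X \<longrightarrow> v x = 0) \<and> (\<forall>x\<in>X. mvec X A v x = lam' * v x) \<longrightarrow>
              (\<forall>x\<in>X. mvec X B v x = f lam' * v x))"
  have orth: "orthon X u n" using ef unfolding eigfam_def by simp
  have Bu: "\<forall>i<n. \<forall>x\<in>X. mvec X B (u i) x = f (lam i) * u i x"
  proof (intro allI impI)
    fix i assume i: "i < n"
    have "(\<forall>x. x \<notin> X \<longrightarrow> u i x = 0) \<and> (\<forall>x\<in>X. mvec X A (u i) x = lam i * u i x)"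
      using ef i unfolding eigfam_def orthon_def by blast
    from h[THEN conjunct2, rule_format, OF this] show "\<forall>x\<in>X. mvec X B (u i) x = f (lam i) * u i x" by blast
  qed
  show "B = spec X u lam n f"
  proof (intro ext)
    fix x y
    show "B x y = spec X u lam n f x y"
    proof (cases "x \<in> X \<and> y \<in> X")
      case True then show ?thesis using spec_unique[where X=X and u=u and n=n and B=B and f=f and lam=lam, OF orth cm Bu] fin by blast
    next
      case False then show ?thesis using h by (auto simp: spec_def)
    qed
  qed
qed

lemma mmul_spec:
  assumes orth: "orthon X u n"
  shows "mmul X (spec X u lam n f) (spec X u lam n g) = spec X u lam n (\<lambda>t. f t * g t)"
proof (intro ext)
  fix x y
  show "mmul X (spec X u lam n f) (spec X u lam n g) x y = spec X u lam n (\<lambda>t. f t * g t) x y"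
  proof (cases "x \<in> X \<and> y \<in> X")
    case True
    have "mmul X (spec X u lam n f) (spec X u lam n g) x y = mvec X (spec X u lam n f) (\<lambda>z. spec X u lam n g z y) x"
      by (simp add: mmul_def mvec_def)
    also have "\<dots> = (\<Sum>i<n. (f (lam i) * ip X (u i) (\<lambda>z. spec X u lam n g z y)) * u i x)"
      using True by (simp add: mvec_spec)
    also have "\<dots> = (\<Sum>i<n. (f (lam i) * (g (lam i) * u i y)) * u i x)"
    proof (intro sum.cong refl)
      fix i assume i: "i \<in> {..<n}"
      have "ip X (u i) (\<lambda>z. spec X u lam n g z y) = ip X (u i) (\<lambda>z. \<Sum>j<n. (g (lam j) * u j y) * u j z)"
        unfolding ip_def spec_def using True by (intro sum.cong refl) (simp add: mult_ac)
      also have "\<dots> = g (lam i) * u i y" using orthon_sum[OF orth] i by simp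
      finally show "(f (lam i) * ip X (u i) (\<lambda>z. spec X u lam n g z y)) * u i x = (f (lam i) * (g (lam i) * u i y)) * u i x"
        by simp
    qed
    also have "\<dots> = spec X u lam n (\<lambda>t. f t * g t) x y" using True by (simp add: spec_def mult_ac)
    finally show ?thesis .
  next
    case False
    then show ?thesis by (auto simp: mmul_def spec_def)
  qed
qed

lemma symm_spec: "symm X (spec X u lam n f)"
  unfolding symm_def spec_def by (simp add: mult_ac)



lemma l1dist_sym: "length x = length y \<Longrightarrow> l1dist x y = l1dist y x"
  unfolding l1dist_def by (simp add: abs_minus_commute)

lemma l1dist_self: "l1dist x x = 0"
  unfolding l1dist_def by simp

lemma l1dist_zero: "length x = length y \<Longrightarrow> l1dist x y = 0 \<Longrightarrow> x = y"
  unfolding l1dist_def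
  by (rule nth_equalityI) auto

lemma l1dist_one:
  assumes lx: "length x = d" and ly: "length y = d" and h: "l1dist x y = 1"
  shows "\<exists>i<d. \<exists>s\<in>{1,-1}. y = x[i := x ! i + s]"
proof -
  define t where "t i = nat \<bar>x ! i - y ! i\<bar>" for i
  have st: "(\<Sum>i<d. t i) = 1" using h lx unfolding l1dist_def t_def by simp
  obtain i where i: "i < d" "t i \<noteq> 0"
  proof (rule ccontr)
    assume "\<not> thesis"
    then have "\<forall>i<d. t i = 0" using that by blast
    then have "(\<Sum>i<d. t i) = 0" by simp
    then show False using st by simp
  qed
  have "(\<Sum>i<d. t i) = t i + (\<Sum>j\<in>{..<d} - {i}. t j)"
    using i by (simp add: sum.remove)
  then have ti: "t i = 1" and rest: "(\<Sum>j\<in>{..<d} - {i}. t j) = 0" using st i by linarith+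
  have oth: "y ! j = x ! j" if "j < d" "j \<noteq> i" for j
  proof -
    have "t j = 0" using rest that by simp
    then show ?thesis by (simp add: t_def)
  qed
  have "\<bar>x ! i - y ! i\<bar> = 1" using ti by (simp add: t_def)
  then have "y ! i = x ! i + 1 \<or> y ! i = x ! i + (-1)" by (auto simp: abs_if split: if_splits)
  then obtain s where s: "s \<in> {1,-1}" "y ! i = x ! i + s" by blast
  have "y = x[i := x ! i + s]"
    by (rule nth_equalityI) (use lx ly i oth s in \<open>auto simp: nth_list_update\<close>)
  then show ?thesis using i s by blast
qed

lemma card_nbrs:
  assumes lx: "length x = d" and lX: "\<forall>y\<in>X. length y = d"
  shows "card {y\<in>X. l1dist x y = 1} \<le> 2 * d"
proof -
  have sub: "{y\<in>X. l1dist x y = 1} \<subseteq> (\<lambda>(i,s). x[i := x ! i + s]) ` ({..<d} \<times> {1,-1})"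
    using l1dist_one[OF lx] lX by fastforce
  have "card {y\<in>X. l1dist x y = 1} \<le> card ((\<lambda>(i,s). x[i := x ! i + s]) ` ({..<d} \<times> {1,-1::int}))"
    by (rule card_mono[OF _ sub]) simp
  also have "\<dots> \<le> card ({..<d} \<times> {1,-1::int})" by (rule card_image_le) simp
  also have "\<dots> = 2 * d" by (simp add: card_cartesian_product)
  finally show ?thesis .
qed

lemma amgm_graph:
  fixes a :: "'i \<Rightarrow> real"
  assumes fin: "finite I" and sym: "\<And>i j. i \<in> I \<Longrightarrow> j \<in> I \<Longrightarrow> R i j \<Longrightarrow> R j i"
    and deg: "\<And>i. i \<in> I \<Longrightarrow> card {j\<in>I. R i j} \<le> D"
  shows "(\<Sum>i\<in>I. \<Sum>j\<in>I. if R i j then a i * a j else 0) \<le> real D * (\<Sum>i\<in>I. (a i)\<^sup>2)"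
proof -
  have cnt: "(\<Sum>j\<in>I. if R i j then (1::real) else 0) = real (card {j\<in>I. R i j})" for i
    using fin by (simp add: sum.If_cases Int_def conj_commute)
  have A: "(\<Sum>i\<in>I. \<Sum>j\<in>I. if R i j then (a i)\<^sup>2 else 0) \<le> real D * (\<Sum>i\<in>I. (a i)\<^sup>2)"
  proof -
    have "(\<Sum>i\<in>I. \<Sum>j\<in>I. if R i j then (a i)\<^sup>2 else 0) = (\<Sum>i\<in>I. (a i)\<^sup>2 * real (card {j\<in>I. R i j}))"
      by (intro sum.cong refl) (simp add: cnt[symmetric] sum_distrib_left if_distrib cong: if_cong)
    also have "\<dots> \<le> (\<Sum>i\<in>I. (a i)\<^sup>2 * real D)"
      by (intro sum_mono mult_left_mono) (simp_all add: deg)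
    finally show ?thesis by (simp add: sum_distrib_left mult.commute)
  qed
  have B: "(\<Sum>i\<in>I. \<Sum>j\<in>I. if R i j then (a j)\<^sup>2 else 0) = (\<Sum>i\<in>I. \<Sum>j\<in>I. if R i j then (a i)\<^sup>2 else 0)"
  proof -
    have "(\<Sum>i\<in>I. \<Sum>j\<in>I. if R i j then (a j)\<^sup>2 else 0) = (\<Sum>j\<in>I. \<Sum>i\<in>I. if R i j then (a j)\<^sup>2 else 0)"
      by (rule sum.swap)
    also have "\<dots> = (\<Sum>j\<in>I. \<Sum>i\<in>I. if R j i then (a j)\<^sup>2 else 0)"
      by (intro sum.cong refl) (use sym in auto)
    finally show ?thesis .
  qed
  have "(\<Sum>i\<in>I. \<Sum>j\<in>I. if R i j then a i * a j else 0)
      \<le> (\<Sum>i\<in>I. \<Sum>j\<in>I. (if R i j then (a i)\<^sup>2 else 0) / 2 + (if R i j then (a j)\<^sup>2 else 0) / 2)"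
  proof (intro sum_mono)
    fix i j
    have "a i * a j \<le> (a i)\<^sup>2 / 2 + (a j)\<^sup>2 / 2"
      using sum_squares_bound[of "a i" "a j"] by (simp add: power2_eq_square)
    then show "(if R i j then a i * a j else 0) \<le> (if R i j then (a i)\<^sup>2 else 0) / 2 + (if R i j then (a j)\<^sup>2 else 0) / 2"
      by simp
  qed
  also have "\<dots> = (\<Sum>i\<in>I. \<Sum>j\<in>I. if R i j then (a i)\<^sup>2 else 0) / 2 + (\<Sum>i\<in>I. \<Sum>j\<in>I. if R i j then (a j)\<^sup>2 else 0) / 2"
    by (simp add: sum.distrib sum_divide_distrib)
  also have "\<dots> \<le> real D * (\<Sum>i\<in>I. (a i)\<^sup>2)" using A B by simp
  finally show ?thesis .
qed


lemma hmat_symm: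
  assumes "\<forall>x\<in>X. length x = d"
  shows "symm X (hmat d k X)"
  unfolding symm_def hmat_def using assms l1dist_sym by auto

lemma hmat_quad:
  assumes fin: "finite X"
  shows "ip X w (mvec X (hmat d k X) w) = (\<Sum>x\<in>X. (2 * real d + k x) * (w x)\<^sup>2)
     - (\<Sum>x\<in>X. \<Sum>y\<in>X. if l1dist x y = 1 then w x * w y else 0)"
proof -
  have "ip X w (mvec X (hmat d k X) w) = (\<Sum>x\<in>X. \<Sum>y\<in>X. w x * hmat d k X x y * w y)"
    by (simp add: ip_def mvec_def sum_distrib_left mult.assoc)
  also have "\<dots> = (\<Sum>x\<in>X. \<Sum>y\<in>X. (if x = y then (2 * real d + k x) * (w x)\<^sup>2 else 0)
      - (if l1dist x y = 1 then w x * w y else 0))"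
    by (intro sum.cong refl) (auto simp: hmat_def l1dist_self power2_eq_square)
  also have "\<dots> = (\<Sum>x\<in>X. (2 * real d + k x) * (w x)\<^sup>2)
     - (\<Sum>x\<in>X. \<Sum>y\<in>X. if l1dist x y = 1 then w x * w y else 0)"
  proof -
    have "(\<Sum>y\<in>X. if x = y then (2 * real d + k x) * (w x)\<^sup>2 else 0) = (2 * real d + k x) * (w x)\<^sup>2"
      if "x \<in> X" for x
      using that fin by (simp add: sum.delta)
    then show ?thesis by (simp add: sum_subtractf)
  qed
  finally show ?thesis .
qed

lemma hmat_psd:
  assumes fin: "finite X" and lX: "\<forall>x\<in>X. length x = d" and kp: "\<forall>x\<in>X. 0 \<le> k x"
  shows "0 \<le> ip X w (mvec X (hmat d k X) w)"
proof -
  have "(\<Sum>x\<in>X. \<Sum>y\<in>X. if l1dist x y = 1 then w x * w y else 0) \<le> real (2 * d) * (\<Sum>x\<in>X. (w x)\<^sup>2)"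
    by (rule amgm_graph[OF fin]) (use lX l1dist_sym card_nbrs in auto)
  also have "\<dots> \<le> (\<Sum>x\<in>X. (2 * real d + k x) * (w x)\<^sup>2)"
    by (simp add: sum_distrib_left) (intro sum_mono mult_right_mono, use kp in auto)
  finally show ?thesis unfolding hmat_quad[OF fin] by simp
qed



lemma sum_restrict_sub:
  assumes "finite L" "S \<subseteq> L"
  shows "(\<Sum>x\<in>L. if x \<in> S then f x else 0) = (\<Sum>x\<in>S. f x)"
proof -
  have "(\<Sum>x\<in>L. if x \<in> S then f x else 0) = (\<Sum>x\<in>L \<inter> S. f x)"
    using assms(1) by (simp add: sum.inter_restrict)
  also have "L \<inter> S = S" using assms(2) by blast
  finally show ?thesis .
qed

lemma sum_over_blocks:
  assumes fin: "finite L" and un: "(\<Union>m\<in>I. B m) = L" and finI: "finite I"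
    and disj: "\<forall>m\<in>I. \<forall>m'\<in>I. m \<noteq> m' \<longrightarrow> B m \<inter> B m' = {}"
  shows "(\<Sum>x\<in>L. f x) = (\<Sum>m\<in>I. \<Sum>x\<in>B m. f x)"
proof -
  have fB: "\<forall>m\<in>I. finite (B m)" using un fin by (metis UN_upper finite_subset)
  have "(\<Sum>x\<in>L. f x) = (\<Sum>x\<in>(\<Union>m\<in>I. B m). f x)" using un by simp
  also have "\<dots> = (\<Sum>m\<in>I. \<Sum>x\<in>B m. f x)" by (rule sum.UNION_disjoint[OF finI fB disj])
  finally show ?thesis .
qed

lemma dual_adj_of:
  assumes fA: "finite A" and fB: "finite B" and dis: "A \<inter> B = {}"
    and lA: "\<forall>x\<in>A. length x = d" and lB: "\<forall>y\<in>B. length y = d"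
    and x: "x \<in> A" and y: "y \<in> B" and h: "l1dist x y = 1"
  shows "dual_adj A B"
proof -
  define S where "S = {l1dist x y | x y. x \<in> A \<and> y \<in> B}"
  have "S = (\<lambda>(x,y). l1dist x y) ` (A \<times> B)" unfolding S_def by auto
  then have fS: "finite S" using fA fB by simp
  have oneS: "1 \<in> S" unfolding S_def using x y h[symmetric] by blast
  then have le: "Min S \<le> 1" using fS by simp
  have "Min S \<in> S" using fS oneS Min_in by blast
  then obtain x' y' where xy: "x' \<in> A" "y' \<in> B" "Min S = l1dist x' y'" unfolding S_def by blast
  have "Min S \<noteq> 0"
  proof
    assume "Min S = 0"
    then have "x' = y'" using l1dist_zero[of x' y'] xy lA lB by simp
    then show False using xy dis by blast
  qed
  then have "Min S = 1" using le by simp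
  then show ?thesis unfolding dual_adj_def S_def .
qed

lemma block_bound:
  fixes L :: "int list set" and Lam :: "nat \<Rightarrow> int list set" and H :: "int list \<Rightarrow> int list \<Rightarrow> real"
  assumes finL: "finite L" and lL: "\<forall>x\<in>L. length x = d"
    and disj: "\<forall>m\<in>{1..M}. \<forall>m'\<in>{1..M}. m \<noteq> m' \<longrightarrow> Lam m \<inter> Lam m' = {}"
    and un: "(\<Union>m\<in>{1..M}. Lam m) = L"
    and H: "H = hmat d k L"
    and psd: "\<forall>p. 0 \<le> ip L p (mvec L H p)"
    and CS: "\<forall>p q. (ip L p (mvec L H q))\<^sup>2 \<le> ip L p (mvec L H p) * ip L q (mvec L H q)"
  shows "ip L w (mvec L H w) \<le> (real (max_degree M Lam) + 1) *
           (\<Sum>m\<in>{1..M}. ip (Lam m) w (mvec (Lam m) (hmat d k (Lam m)) w))"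
proof -
  define I where "I = {1..M}"
  have finI: "finite I" by (simp add: I_def)
  have sub: "Lam m \<subseteq> L" if "m \<in> I" for m using un that I_def by blast
  have finB: "finite (Lam m)" if "m \<in> I" for m using sub[OF that] finL finite_subset by blast
  define wm where "wm m = (\<lambda>x. if x \<in> Lam m then w x else 0)" for m
  define Bk where "Bk m m' = (\<Sum>x\<in>Lam m. \<Sum>y\<in>Lam m'. w x * H x y * w y)" for m m'
  have disjI: "\<forall>m\<in>I. \<forall>m'\<in>I. m \<noteq> m' \<longrightarrow> Lam m \<inter> Lam m' = {}" using disj I_def by simp
  have unI: "(\<Union>m\<in>I. Lam m) = L" using un I_def by simp
  have tot: "ip L w (mvec L H w) = (\<Sum>m\<in>I. \<Sum>m'\<in>I. Bk m m')"
  proof -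
    have "ip L w (mvec L H w) = (\<Sum>x\<in>L. \<Sum>y\<in>L. w x * H x y * w y)"
      by (simp add: ip_def mvec_def sum_distrib_left mult.assoc)
    also have "\<dots> = (\<Sum>m\<in>I. \<Sum>x\<in>Lam m. \<Sum>y\<in>L. w x * H x y * w y)"
      by (rule sum_over_blocks[OF finL unI finI disjI])
    also have "\<dots> = (\<Sum>m\<in>I. \<Sum>x\<in>Lam m. \<Sum>m'\<in>I. \<Sum>y\<in>Lam m'. w x * H x y * w y)"
      by (intro sum.cong refl sum_over_blocks[OF finL unI finI disjI])
    also have "\<dots> = (\<Sum>m\<in>I. \<Sum>m'\<in>I. Bk m m')"
      unfolding Bk_def by (intro sum.cong refl sum.swap)
    finally show ?thesis .
  qed
  have Bk_ip: "Bk m m' = ip L (wm m) (mvec L H (wm m'))" if "m \<in> I" "m' \<in> I" for m m'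
  proof -
    have "ip L (wm m) (mvec L H (wm m')) = (\<Sum>x\<in>L. if x \<in> Lam m then (\<Sum>y\<in>L. if y \<in> Lam m' then w x * H x y * w y else 0) else 0)"
      unfolding ip_def mvec_def wm_def
      by (intro sum.cong refl) (simp add: sum_distrib_left if_distrib mult.assoc cong: if_cong)
    also have "\<dots> = (\<Sum>x\<in>Lam m. \<Sum>y\<in>L. if y \<in> Lam m' then w x * H x y * w y else 0)"
      by (rule sum_restrict_sub[OF finL sub[OF that(1)]])
    also have "\<dots> = Bk m m'"
      unfolding Bk_def by (intro sum.cong refl sum_restrict_sub[OF finL sub[OF that(2)]])
    finally show ?thesis by simp
  qed
  have Bk_diag: "Bk m m = ip (Lam m) w (mvec (Lam m) (hmat d k (Lam m)) w)" if "m \<in> I" for m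
  proof -
    have "Bk m m = (\<Sum>x\<in>Lam m. \<Sum>y\<in>Lam m. w x * hmat d k (Lam m) x y * w y)"
      unfolding Bk_def H using sub[OF that] by (intro sum.cong refl) (auto simp: hmat_def)
    also have "\<dots> = ip (Lam m) w (mvec (Lam m) (hmat d k (Lam m)) w)"
      by (simp add: ip_def mvec_def sum_distrib_left mult.assoc)
    finally show ?thesis .
  qed
  have Bk_nn: "0 \<le> Bk m m" if "m \<in> I" for m using Bk_ip[OF that that] psd by simp
  define a where "a m = sqrt (Bk m m)" for m
  have Bk_le: "Bk m m' \<le> a m * a m'" if "m \<in> I" "m' \<in> I" for m m'
  proof -
    have "(Bk m m')\<^sup>2 \<le> Bk m m * Bk m' m'"
      using CS Bk_ip[OF that] Bk_ip[OF that(1) that(1)] Bk_ip[OF that(2) that(2)] by simp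
    then have "sqrt ((Bk m m')\<^sup>2) \<le> sqrt (Bk m m * Bk m' m')" by (rule real_sqrt_le_mono)
    then have "\<bar>Bk m m'\<bar> \<le> a m * a m'" by (simp add: a_def real_sqrt_mult)
    then show ?thesis by simp
  qed
  define R where "R m m' \<longleftrightarrow> m \<noteq> m' \<and> (\<exists>x\<in>Lam m. \<exists>y\<in>Lam m'. l1dist x y = 1)" for m m'
  have Bk_zero: "Bk m m' = 0" if "m \<in> I" "m' \<in> I" "m \<noteq> m'" "\<not> R m m'" for m m'
  proof -
    have "H x y = 0" if "x \<in> Lam m" "y \<in> Lam m'" for x y
    proof -
      have "x \<noteq> y" using disjI \<open>m \<in> I\<close> \<open>m' \<in> I\<close> \<open>m \<noteq> m'\<close> that by blast
      moreover have "l1dist x y \<noteq> 1" using \<open>\<not> R m m'\<close> \<open>m \<noteq> m'\<close> that unfolding R_def by blast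
      ultimately show ?thesis unfolding H hmat_def by simp
    qed
    then show ?thesis unfolding Bk_def by simp
  qed
  have split: "(\<Sum>m\<in>I. \<Sum>m'\<in>I. Bk m m') = (\<Sum>m\<in>I. Bk m m) + (\<Sum>m\<in>I. \<Sum>m'\<in>I. if R m m' then Bk m m' else 0)"
  proof -
    have "(\<Sum>m\<in>I. \<Sum>m'\<in>I. Bk m m') = (\<Sum>m\<in>I. \<Sum>m'\<in>I. (if m' = m then Bk m m' else 0) + (if R m m' then Bk m m' else 0))"
      by (intro sum.cong refl) (use Bk_zero in \<open>auto simp: R_def\<close>)
    also have "\<dots> = (\<Sum>m\<in>I. Bk m m) + (\<Sum>m\<in>I. \<Sum>m'\<in>I. if R m m' then Bk m m' else 0)"
      using finI by (simp add: sum.distrib)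
    finally show ?thesis .
  qed
  have deg: "card {m'\<in>I. R m m'} \<le> max_degree M Lam" if "m \<in> I" for m
  proof -
    have "{m'\<in>I. R m m'} \<subseteq> {i\<in>{1..M}. i \<noteq> m \<and> dual_adj (Lam m) (Lam i)}"
    proof
      fix m' assume "m' \<in> {m'\<in>I. R m m'}"
      then have m': "m' \<in> I" "R m m'" by auto
      then obtain x y where xy: "x \<in> Lam m" "y \<in> Lam m'" "l1dist x y = 1" "m \<noteq> m'" unfolding R_def by blast
      have "dual_adj (Lam m) (Lam m')"
        by (rule dual_adj_of[OF finB[OF that] finB[OF m'(1)] _ _ _ xy(1,2,3)])
           (use disjI that m' xy sub lL in blast)+
      then show "m' \<in> {i\<in>{1..M}. i \<noteq> m \<and> dual_adj (Lam m) (Lam i)}" using m' xy I_def by auto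
    qed
    then have "card {m'\<in>I. R m m'} \<le> card {i\<in>{1..M}. i \<noteq> m \<and> dual_adj (Lam m) (Lam i)}"
      by (intro card_mono) auto
    also have "\<dots> \<le> max_degree M Lam"
      unfolding max_degree_def using that I_def by (intro Max_ge) auto
    finally show ?thesis .
  qed
  have Rsym: "R m' m" if hh: "m \<in> I" "m' \<in> I" "R m m'" for m m'
  proof -
    obtain x y where xy: "x \<in> Lam m" "y \<in> Lam m'" "l1dist x y = 1" "m \<noteq> m'" using hh(3) unfolding R_def by blast
    have "x \<in> L" "y \<in> L" using xy sub hh by auto
    then have "length x = length y" using lL by simp
    then have "l1dist y x = 1" using xy l1dist_sym[of x y] by simp
    then show ?thesis using xy unfolding R_def by blast
  qed
  have "(\<Sum>m\<in>I. \<Sum>m'\<in>I. if R m m' then Bk m m' else 0) \<le> (\<Sum>m\<in>I. \<Sum>m'\<in>I. if R m m' then a m * a m' else 0)"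
    by (intro sum_mono) (simp add: Bk_le)
  also have "\<dots> \<le> real (max_degree M Lam) * (\<Sum>m\<in>I. (a m)\<^sup>2)"
    by (rule amgm_graph[OF finI]) (use Rsym deg in auto)
  also have "(\<Sum>m\<in>I. (a m)\<^sup>2) = (\<Sum>m\<in>I. Bk m m)"
    by (intro sum.cong refl) (simp add: a_def Bk_nn)
  finally have "ip L w (mvec L H w) \<le> (real (max_degree M Lam) + 1) * (\<Sum>m\<in>I. Bk m m)"
    using tot split by (simp add: algebra_simps)
  also have "(\<Sum>m\<in>I. Bk m m) = (\<Sum>m\<in>{1..M}. ip (Lam m) w (mvec (Lam m) (hmat d k (Lam m)) w))"
    unfolding I_def by (intro sum.cong refl Bk_diag) (simp add: I_def)
  finally show ?thesis .
qed



lemma tanh_ext_sq: "(tanh_ext b s)\<^sup>2 \<le> 1"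
proof (cases "b = \<infinity>")
  case True then show ?thesis by (simp add: tanh_ext_def)
next
  case False
  have "\<bar>tanh (real_of_ereal b * s)\<bar> \<le> 1"
    using tanh_real_lt_1[of "real_of_ereal b * s"] tanh_real_gt_neg1[of "real_of_ereal b * s"] by linarith
  then show ?thesis using False by (simp add: tanh_ext_def abs_square_le_1)
qed

lemma g_bound:
  fixes t T :: real
  assumes "T\<^sup>2 \<le> 1"
  shows "t * (1 / sqrt t * T)\<^sup>2 \<le> 1"
proof (cases "t > 0")
  case True
  have "t * (1 / sqrt t * T)\<^sup>2 = t * (1 / (sqrt t)\<^sup>2) * T\<^sup>2" by (simp add: power_mult_distrib power_divide)
  also have "\<dots> = T\<^sup>2" using True by simp
  finally show ?thesis using assms by simp
next
  case False
  then have "t * (1 / sqrt t * T)\<^sup>2 \<le> 0" by (simp add: mult_nonpos_nonneg)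
  then show ?thesis by simp
qed

lemma mvec_cong: "(\<And>y. y \<in> X \<Longrightarrow> w y = w' y) \<Longrightarrow> mvec X A w = mvec X A w'"
  unfolding mvec_def by (intro ext sum.cong refl) simp

lemma ip_quad_cong:
  assumes "\<And>x. x \<in> X \<Longrightarrow> w x = w' x"
  shows "ip X w (mvec X A w) = ip X w' (mvec X A w')"
  using mvec_cong[of X w w' A, OF assms] assms unfolding ip_def by (simp cong: sum.cong)

lemma mvec_mmul: "mvec X (mmul X A B) v x = mvec X A (mvec X B v) x"
proof -
  have "mvec X (mmul X A B) v x = (\<Sum>y\<in>X. \<Sum>z\<in>X. A x z * (B z y * v y))"
    by (simp add: mvec_def mmul_def sum_distrib_right mult.assoc)
  also have "\<dots> = (\<Sum>z\<in>X. \<Sum>y\<in>X. A x z * (B z y * v y))" by (rule sum.swap)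
  also have "\<dots> = mvec X A (mvec X B v) x" by (simp add: mvec_def sum_distrib_left)
  finally show ?thesis .
qed

lemma spec_form:
  assumes fin: "finite X" and ef: "eigfam X A u lam n" and cm: "cmpl X u n"
  shows "ip X p (mvec X A q) = (\<Sum>i<n. lam i * ip X (u i) p * ip X (u i) q)"
proof -
  have orth: "orthon X u n" using ef eigfam_def by blast
  have Au: "\<forall>i<n. \<forall>x\<in>X. mvec X A (u i) x = (\<lambda>t. t) (lam i) * u i x" using ef eigfam_def by simp
  have "mvec X A q x = mvec X (spec X u lam n (\<lambda>t. t)) q x" if "x \<in> X" for x
    unfolding mvec_def
    by (intro sum.cong refl) (simp add: spec_unique[where B=A and f="\<lambda>t. t", OF orth cm Au that _ fin])
  then have "ip X p (mvec X A q) = ip X p (mvec X (spec X u lam n (\<lambda>t. t)) q)"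
    by (intro ip_cong_right) simp
  also have "\<dots> = (\<Sum>i<n. lam i * ip X (u i) p * ip X (u i) q)" by (rule ip_spec[OF orth cm])
  finally show ?thesis .
qed

lemma ip_CS: "(ip X p q)\<^sup>2 \<le> ip X p p * ip X q q"
  unfolding ip_def using Cauchy_Schwarz_ineq_sum[of p q X] by (simp add: power2_eq_square)



lemma main_det:
  fixes L :: "int list set" and Lam :: "nat \<Rightarrow> int list set" and k :: "int list \<Rightarrow> real"
    and \<beta> :: "nat \<Rightarrow> ereal"
  assumes finL: "finite L" and lL: "\<forall>x\<in>L. length x = d" and kp: "\<forall>x\<in>L. 0 \<le> k x"
    and disj: "\<forall>m\<in>{1..M}. \<forall>m'\<in>{1..M}. m \<noteq> m' \<longrightarrow> Lam m \<inter> Lam m' = {}"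
    and un: "(\<Union>m\<in>{1..M}. Lam m) = L"
  shows "opnorm L (mmul L (Dminus d k M Lam \<beta>) (matfun sqrt L (hmat d k L)))
           \<le> sqrt (real (max_degree M Lam) + 1)"
proof -
  define H where "H = hmat d k L"
  define c where "c = real (max_degree M Lam) + 1"
  have c0: "0 \<le> c" by (simp add: c_def)
  have symH: "symm L H" unfolding H_def by (rule hmat_symm[OF lL])
  obtain u lam n where ef: "eigfam L H u lam n" and cm: "cmpl L u n"
    using spectral[OF finL symH] by blast
  have orth: "orthon L u n" using ef eigfam_def by blast
  have Hform: "ip L p (mvec L H q) = (\<Sum>i<n. lam i * ip L (u i) p * ip L (u i) q)" for p q
    by (rule spec_form[OF finL ef cm])
  have psd: "\<forall>p. 0 \<le> ip L p (mvec L H p)"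
    unfolding H_def using hmat_psd[OF finL lL kp] by blast
  have lam_nn: "0 \<le> lam i" if "i < n" for i
  proof -
    have "ip L (u i) (mvec L H (u i)) = lam i * ip L (u i) (u i)"
      using ef that unfolding eigfam_def ip_def by (simp add: sum_distrib_left mult_ac)
    also have "\<dots> = lam i" using orth that unfolding orthon_def by simp
    finally show ?thesis using psd by metis
  qed
  have CS: "\<forall>p q. (ip L p (mvec L H q))\<^sup>2 \<le> ip L p (mvec L H p) * ip L q (mvec L H q)"
  proof (intro allI)
    fix p q
    have "(\<Sum>i<n. lam i * ip L (u i) p * ip L (u i) q) = (\<Sum>i<n. (sqrt (lam i) * ip L (u i) p) * (sqrt (lam i) * ip L (u i) q))"
      by (intro sum.cong refl) (simp add: lam_nn mult_ac real_sqrt_mult[symmetric])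
    moreover have "(\<Sum>i<n. lam i * ip L (u i) p * ip L (u i) p) = (\<Sum>i<n. (sqrt (lam i) * ip L (u i) p)\<^sup>2)"
      by (intro sum.cong refl) (simp add: lam_nn power2_eq_square mult_ac real_sqrt_mult[symmetric])
    moreover have "(\<Sum>i<n. lam i * ip L (u i) q * ip L (u i) q) = (\<Sum>i<n. (sqrt (lam i) * ip L (u i) q)\<^sup>2)"
      by (intro sum.cong refl) (simp add: lam_nn power2_eq_square mult_ac real_sqrt_mult[symmetric])
    ultimately show "(ip L p (mvec L H q))\<^sup>2 \<le> ip L p (mvec L H p) * ip L q (mvec L H q)"
      unfolding Hform by (simp add: Cauchy_Schwarz_ineq_sum)
  qed
  define Sq where "Sq = matfun sqrt L H"
  have Sq_eq: "Sq = spec L u lam n sqrt" unfolding Sq_def by (rule matfun_eq[OF finL symH ef cm])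
  have Sq_norm: "ip L (mvec L Sq w) (mvec L Sq w) = ip L w (mvec L H w)" for w
  proof -
    have "ip L (mvec L Sq w) (mvec L Sq w) = (\<Sum>i<n. ip L (u i) (mvec L Sq w) * ip L (u i) (mvec L Sq w))"
      by (rule ip_expand[OF cm])
    also have "\<dots> = (\<Sum>i<n. lam i * ip L (u i) w * ip L (u i) w)"
      unfolding Sq_eq
      by (intro sum.cong refl) (simp add: spec_coef[OF orth] lam_nn)
    also have "\<dots> = ip L w (mvec L H w)" by (simp add: Hform)
    finally show ?thesis .
  qed
  define I where "I = {1..M}"
  have finI: "finite I" by (simp add: I_def)
  have subB: "Lam m \<subseteq> L" if "m \<in> I" for m using un that I_def by blast
  have finB: "finite (Lam m)" if "m \<in> I" for m using subB[OF that] finL finite_subset by blast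
  have lB: "\<forall>x\<in>Lam m. length x = d" if "m \<in> I" for m using subB[OF that] lL by blast
  have "\<forall>m\<in>I. \<exists>t. eigfam (Lam m) (hmat d k (Lam m)) (fst t) (fst (snd t)) (snd (snd t))
      \<and> cmpl (Lam m) (fst t) (snd (snd t))"
  proof
    fix m assume m: "m \<in> I"
    obtain u' lam' n' where "eigfam (Lam m) (hmat d k (Lam m)) u' lam' n' \<and> cmpl (Lam m) u' n'"
      using spectral[OF finB[OF m] hmat_symm[OF lB[OF m]]] by blast
    then show "\<exists>t. eigfam (Lam m) (hmat d k (Lam m)) (fst t) (fst (snd t)) (snd (snd t))
      \<and> cmpl (Lam m) (fst t) (snd (snd t))" by (intro exI[of _ "(u', lam', n')"]) simp
  qed
  then obtain T where T: "\<forall>m\<in>I. eigfam (Lam m) (hmat d k (Lam m)) (fst (T m)) (fst (snd (T m))) (snd (snd (T m)))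
      \<and> cmpl (Lam m) (fst (T m)) (snd (snd (T m)))"
    by (metis bchoice)
  define U where "U m = fst (T m)" for m
  define LA where "LA m = fst (snd (T m))" for m
  define NN where "NN m = snd (snd (T m))" for m
  have efB: "eigfam (Lam m) (hmat d k (Lam m)) (U m) (LA m) (NN m)" if "m \<in> I" for m
    using T that unfolding U_def LA_def NN_def by blast
  have cmB: "cmpl (Lam m) (U m) (NN m)" if "m \<in> I" for m
    using T that unfolding U_def NN_def by blast
  have orthB: "orthon (Lam m) (U m) (NN m)" if "m \<in> I" for m using efB[OF that] eigfam_def by blast
  define g where "g m = (\<lambda>t. 1 / sqrt t * tanh_ext (\<beta> m) (sqrt t))" for m
  define Dm where "Dm m = spec (Lam m) (U m) (LA m) (NN m) (g m)" for m
  define D where "D = Dminus d k M Lam \<beta>"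
  have Dform: "D x y = (\<Sum>m\<in>I. Dm m x y)" for x y
    unfolding D_def Dminus_def I_def
  proof (intro sum.cong refl)
    fix m assume m: "m \<in> {1..M}"
    then have m': "m \<in> I" by (simp add: I_def)
    have sB: "symm (Lam m) (hmat d k (Lam m))" by (rule hmat_symm[OF lB[OF m']])
    show "mmul (Lam m) (matfun (\<lambda>t. 1 / sqrt t) (Lam m) (hmat d k (Lam m)))
          (matfun (\<lambda>t. tanh_ext (\<beta> m) (sqrt t)) (Lam m) (hmat d k (Lam m))) x y = Dm m x y"
      unfolding matfun_eq[OF finB[OF m'] sB efB[OF m'] cmB[OF m']] mmul_spec[OF orthB[OF m']]
      by (simp add: Dm_def g_def)
  qed
  have Dm_sym: "Dm m x y = Dm m y x" for m x y
    unfolding Dm_def spec_def by (auto simp: mult_ac)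
  have Dm_out: "Dm m x y = 0" if "x \<notin> Lam m \<or> y \<notin> Lam m" for m x y
    using that unfolding Dm_def spec_def by auto
  have symD: "symm L D" unfolding symm_def Dform using Dm_sym by simp
  have D_loc: "mvec L D p x = mvec (Lam m) (Dm m) p x" if m: "m \<in> I" and x: "x \<in> Lam m" for m x p
  proof -
    have "D x y = Dm m x y" for y
    proof -
      have "(\<Sum>m'\<in>I. Dm m' x y) = Dm m x y + (\<Sum>m'\<in>I - {m}. Dm m' x y)"
        using m finI by (simp add: sum.remove)
      also have "(\<Sum>m'\<in>I - {m}. Dm m' x y) = 0"
      proof (intro sum.neutral ballI)
        fix m' assume "m' \<in> I - {m}"
        then have "x \<notin> Lam m'" using disj x m unfolding I_def by blast
        then show "Dm m' x y = 0" using Dm_out by blast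
      qed
      finally show ?thesis using Dform by simp
    qed
    then have "mvec L D p x = (\<Sum>y\<in>L. Dm m x y * p y)" by (simp add: mvec_def)
    also have "\<dots> = (\<Sum>y\<in>Lam m. Dm m x y * p y)"
      by (rule sum.mono_neutral_right[OF finL subB[OF m]]) (simp add: Dm_out)
    finally show ?thesis by (simp add: mvec_def)
  qed
  have blk: "ip (Lam m) (mvec L D p) (mvec (Lam m) (hmat d k (Lam m)) (mvec L D p)) \<le> ip (Lam m) p p"
    if m: "m \<in> I" for m p
  proof -
    define w' where "w' = mvec (Lam m) (Dm m) p"
    have "ip (Lam m) (mvec L D p) (mvec (Lam m) (hmat d k (Lam m)) (mvec L D p))
        = ip (Lam m) w' (mvec (Lam m) (hmat d k (Lam m)) w')"
      by (rule ip_quad_cong) (simp add: w'_def D_loc[OF m])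
    also have "\<dots> = (\<Sum>i<NN m. LA m i * ip (Lam m) (U m i) w' * ip (Lam m) (U m i) w')"
      by (rule spec_form[OF finB[OF m] efB[OF m] cmB[OF m]])
    also have "\<dots> = (\<Sum>i<NN m. (LA m i * (g m (LA m i))\<^sup>2) * (ip (Lam m) (U m i) p)\<^sup>2)"
      unfolding w'_def Dm_def
      by (intro sum.cong refl) (simp add: spec_coef[OF orthB[OF m]] power2_eq_square mult_ac)
    also have "\<dots> \<le> (\<Sum>i<NN m. 1 * (ip (Lam m) (U m i) p)\<^sup>2)"
    proof (intro sum_mono mult_right_mono)
      fix i
      show "LA m i * (g m (LA m i))\<^sup>2 \<le> 1"
        unfolding g_def using g_bound[OF tanh_ext_sq] by blast
    qed simp
    also have "\<dots> = ip (Lam m) p p"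
      using ip_expand[OF cmB[OF m], of p p] by (simp add: power2_eq_square)
    finally show ?thesis .
  qed
  have key: "ip L (mvec L Sq (mvec L D p)) (mvec L Sq (mvec L D p)) \<le> c * ip L p p" for p
  proof -
    have "ip L (mvec L Sq (mvec L D p)) (mvec L Sq (mvec L D p)) = ip L (mvec L D p) (mvec L H (mvec L D p))"
      by (rule Sq_norm)
    also have "\<dots> \<le> c * (\<Sum>m\<in>{1..M}. ip (Lam m) (mvec L D p) (mvec (Lam m) (hmat d k (Lam m)) (mvec L D p)))"
      unfolding c_def by (rule block_bound[OF finL lL disj un H_def psd CS])
    also have "\<dots> \<le> c * (\<Sum>m\<in>I. ip (Lam m) p p)"
      unfolding I_def[symmetric] by (intro mult_left_mono sum_mono blk c0)
    also have "(\<Sum>m\<in>I. ip (Lam m) p p) = ip L p p"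
      unfolding ip_def
      by (rule sum_over_blocks[symmetric, OF finL _ finI]) (use un disj I_def in auto)
    finally show ?thesis .
  qed
  have symSq: "symm L Sq" unfolding Sq_eq by (rule symm_spec)
  have adj: "ip L (mvec L D (mvec L Sq v)) (mvec L D (mvec L Sq v)) \<le> c * ip L v v" for v
  proof -
    define z where "z = mvec L D (mvec L Sq v)"
    have "ip L z z = ip L (mvec L Sq (mvec L D z)) v"
    proof -
      have "ip L z z = ip L (mvec L D z) (mvec L Sq v)"
        unfolding z_def[symmetric] using ip_mvec_sym[OF symD, of z "mvec L Sq v"] z_def by simp
      also have "\<dots> = ip L (mvec L Sq v) (mvec L D z)" by (rule ip_sym)
      also have "\<dots> = ip L v (mvec L Sq (mvec L D z))" using ip_mvec_sym[OF symSq] by simp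
      also have "\<dots> = ip L (mvec L Sq (mvec L D z)) v" by (rule ip_sym)
      finally show ?thesis .
    qed
    then have "(ip L z z)\<^sup>2 \<le> ip L (mvec L Sq (mvec L D z)) (mvec L Sq (mvec L D z)) * ip L v v"
      using ip_CS by metis
    also have "\<dots> \<le> (c * ip L z z) * ip L v v"
      by (intro mult_right_mono key ip_self_nonneg)
    finally have h: "(ip L z z)\<^sup>2 \<le> (c * ip L v v) * ip L z z" by (simp add: mult_ac)
    show ?thesis
    proof (cases "ip L z z = 0")
      case True then show ?thesis unfolding z_def[symmetric] using c0 ip_self_nonneg[of L v] by simp
    next
      case False
      then have "ip L z z > 0" using ip_self_nonneg[of L z] by linarith
      then show ?thesis unfolding z_def[symmetric] using h by (simp add: power2_eq_square)
    qed
  qed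
  show ?thesis
    unfolding opnorm_def H_def[symmetric] Sq_def[symmetric] D_def[symmetric]
  proof (rule cSup_least)
    show "{sqrt (\<Sum>x\<in>L. (mvec L (mmul L D Sq) v x)\<^sup>2) | v. (\<forall>x. x \<notin> L \<longrightarrow> v x = 0) \<and> (\<Sum>x\<in>L. (v x)\<^sup>2) \<le> 1} \<noteq> {}"
      by (rule ex_in_conv[THEN iffD1], rule exI[of _ "sqrt (\<Sum>x\<in>L. (mvec L (mmul L D Sq) (\<lambda>_. 0) x)\<^sup>2)"]) auto
  next
    fix r assume "r \<in> {sqrt (\<Sum>x\<in>L. (mvec L (mmul L D Sq) v x)\<^sup>2) | v. (\<forall>x. x \<notin> L \<longrightarrow> v x = 0) \<and> (\<Sum>x\<in>L. (v x)\<^sup>2) \<le> 1}"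
    then obtain v where r: "r = sqrt (\<Sum>x\<in>L. (mvec L (mmul L D Sq) v x)\<^sup>2)" and v1: "(\<Sum>x\<in>L. (v x)\<^sup>2) \<le> 1"
      by blast
    have "(\<Sum>x\<in>L. (mvec L (mmul L D Sq) v x)\<^sup>2) = ip L (mvec L D (mvec L Sq v)) (mvec L D (mvec L Sq v))"
      by (simp add: ip_def mvec_mmul power2_eq_square)
    also have "\<dots> \<le> c * ip L v v" by (rule adj)
    also have "\<dots> \<le> c * 1" using v1 c0 by (intro mult_left_mono) (simp_all add: ip_def power2_eq_square)
    finally show "r \<le> sqrt (real (max_degree M Lam) + 1)" unfolding r c_def by simp
  qed
qed



lemma finite_box: "finite (box d a b)"
proof -
  have "box d a b \<subseteq> {xs. set xs \<subseteq> {(MIN i\<in>{..<d}. a i)..(MAX i\<in>{..<d}. b i)} \<and> length xs = d}"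
  proof
    fix xs assume xs: "xs \<in> box d a b"
    have "set xs \<subseteq> {(MIN i\<in>{..<d}. a i)..(MAX i\<in>{..<d}. b i)}"
    proof
      fix z assume "z \<in> set xs"
      then obtain i where i: "i < length xs" "xs ! i = z" by (auto simp: in_set_conv_nth)
      have id: "i < d" using i xs by (simp add: box_def)
      have "(MIN i\<in>{..<d}. a i) \<le> a i" using id by (intro Min_le) auto
      moreover have "b i \<le> (MAX i\<in>{..<d}. b i)" using id by (intro Max_ge) auto
      moreover have "a i \<le> xs ! i" "xs ! i \<le> b i" using xs id by (simp_all add: box_def)
      ultimately show "z \<in> {(MIN i\<in>{..<d}. a i)..(MAX i\<in>{..<d}. b i)}"
        using i by simp
    qed
    then show "xs \<in> {xs. set xs \<subseteq> {(MIN i\<in>{..<d}. a i)..(MAX i\<in>{..<d}. b i)} \<and> length xs = d}"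
      using xs by (simp add: box_def)
  qed
  then show ?thesis by (rule finite_subset) (intro finite_lists_length_eq, simp)
qed

theorem lemma4p1:
  fixes P :: "'w measure" and k :: "'w \<Rightarrow> int list \<Rightarrow> real"
    and \<nu> :: "real \<Rightarrow> real" and kmax :: real
    and d L M :: nat and Lam :: "nat \<Rightarrow> int list set" and \<beta> :: "nat \<Rightarrow> ereal"
  assumes "prob_space P"
    and "d \<ge> 1"
    and "0 < kmax"
    and "\<nu> \<in> borel_measurable borel" and "\<forall>t. 0 \<le> \<nu> t" and "\<exists>C. \<forall>t. \<nu> t \<le> C"
    and "closure {t. \<nu> t \<noteq> 0} = {0..kmax}"
    and "\<forall>x\<in>box d (\<lambda>_. - int L) (\<lambda>_. int L).
           distributed P lborel (\<lambda>\<omega>. k \<omega> x) (\<lambda>t. ennreal (\<nu> t))"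
    and "prob_space.indep_vars P (\<lambda>_. borel) (\<lambda>x \<omega>. k \<omega> x) (box d (\<lambda>_. - int L) (\<lambda>_. int L))"
    and "\<forall>m\<in>{1..M}. is_box d (Lam m)"
    and "\<forall>m\<in>{1..M}. \<forall>m'\<in>{1..M}. m \<noteq> m' \<longrightarrow> Lam m \<inter> Lam m' = {}"
    and "(\<Union>m\<in>{1..M}. Lam m) = box d (\<lambda>_. - int L) (\<lambda>_. int L)"
    and "\<forall>m\<in>{1..M}. 0 < \<beta> m"
  shows "AE \<omega> in P.
     opnorm (box d (\<lambda>_. - int L) (\<lambda>_. int L))
       (mmul (box d (\<lambda>_. - int L) (\<lambda>_. int L))
          (Dminus d (k \<omega>) M Lam \<beta>)
          (matfun sqrt (box d (\<lambda>_. - int L) (\<lambda>_. int L))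
             (hmat d (k \<omega>) (box d (\<lambda>_. - int L) (\<lambda>_. int L)))))
     \<le> sqrt (real (max_degree M Lam) + 1)"
proof -
  define B where "B = box d (\<lambda>_. - int L) (\<lambda>_. int L)"
  have finB: "finite B" unfolding B_def by (rule finite_box)
  have lB: "\<forall>x\<in>B. length x = d" unfolding B_def box_def by simp
  have nu0: "\<nu> t = 0" if "t < 0" for t
  proof (rule ccontr)
    assume "\<nu> t \<noteq> 0"
    then have "t \<in> {t. \<nu> t \<noteq> 0}" by simp
    then have "t \<in> closure {t. \<nu> t \<noteq> 0}" by (rule subsetD[OF closure_subset])
    then have "t \<in> {0..kmax}" unfolding assms(7) .
    then show False using that by simp
  qed
  have AEx: "AE \<omega> in P. 0 \<le> k \<omega> x" if x: "x \<in> B" for x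
  proof -
    have dist: "distributed P lborel (\<lambda>\<omega>. k \<omega> x) (\<lambda>t. ennreal (\<nu> t))"
      using assms(8) x unfolding B_def by blast
    have meas: "(\<lambda>\<omega>. k \<omega> x) \<in> measurable P lborel" using dist by (simp add: distributed_def)
    define N where "N = (\<lambda>\<omega>. k \<omega> x) -` {..<0} \<inter> space P"
    have "emeasure P N = (\<integral>\<^sup>+t. ennreal (\<nu> t) * indicator {..<0::real} t \<partial>lborel)"
      unfolding N_def by (rule distributed_emeasure[OF dist]) simp
    also have "(\<lambda>t. ennreal (\<nu> t) * indicator {..<0::real} t) = (\<lambda>t. 0)"
    proof (rule ext)
      fix t :: real
      show "ennreal (\<nu> t) * indicator {..<0} t = 0" by (cases "t < 0") (simp_all add: nu0)
    qed
    finally have "emeasure P N = 0" by simp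
    moreover have "N \<in> sets P" unfolding N_def by (rule measurable_sets[OF meas]) simp
    ultimately have "N \<in> null_sets P" by (simp add: null_setsI)
    moreover have "{\<omega>\<in>space P. \<not> 0 \<le> k \<omega> x} \<subseteq> N" unfolding N_def by auto
    ultimately show ?thesis by (rule AE_I')
  qed
  have AEall: "AE \<omega> in P. \<forall>x\<in>B. 0 \<le> k \<omega> x" by (rule AE_finite_allI[OF finB AEx])
  have impl: "\<forall>\<omega>. (\<forall>x\<in>B. 0 \<le> k \<omega> x) \<longrightarrow> opnorm B (mmul B (Dminus d (k \<omega>) M Lam \<beta>) (matfun sqrt B (hmat d (k \<omega>) B)))
          \<le> sqrt (real (max_degree M Lam) + 1)"
  proof (intro allI impI)
    fix \<omega> assume kp: "\<forall>x\<in>B. 0 \<le> k \<omega> x"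
    show "opnorm B (mmul B (Dminus d (k \<omega>) M Lam \<beta>) (matfun sqrt B (hmat d (k \<omega>) B)))
          \<le> sqrt (real (max_degree M Lam) + 1)"
      by (rule main_det[OF finB lB kp assms(11)]) (use assms(12) in \<open>simp add: B_def\<close>)
  qed
  have "AE \<omega> in P. opnorm B (mmul B (Dminus d (k \<omega>) M Lam \<beta>) (matfun sqrt B (hmat d (k \<omega>) B)))
          \<le> sqrt (real (max_degree M Lam) + 1)"
    using AEall by (rule eventually_mono) (use impl in blast)
  then show ?thesis unfolding B_def .
qed

end
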